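(* Let $m,n \ge 2$ be integers. The Cartesian product $K_m \times K_n$ is a circulant graph if and only if either $\gcd(m,n)=1$ or $m=n=2$.
   Context: The Cartesian product $G \times H$ of graphs $G$ and $H$ has vertex set $V(G)\times V(H)$, with $(g,h)$ adjacent to $(g',h')$ if and only if either $g=g'$ and $h$ is adjacent to $h'$ in $H$, or $h=h'$ and $g$ is adjacent to $g'$ in $G$. For an integer $n\ge 1$ and a set $S$ of integers, the circulant graph $C_nS$ has vertex set $\{0,1,\dots,n-1\}$, with $i$ adjacent to $j$ if and only if $i-j \equiv \pm s \pmod n$ for some $s\in S$. A graph is circulant if it is isomorphic to some $C_nS$; equivalently, if its automorphism group contains a cyclic subgroup acting transitively on the vertices. $K_n$ denotes the complete graph on $n$ vertices (no loops). *)

theory Defs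
  imports Main "HOL-Number_Theory.Cong"
begin

text \<open>A graph is represented by a vertex set together with an adjacency relation
  (only its restriction to the vertex set matters).\<close>

definition graph_iso :: "'a set \<Rightarrow> ('a \<Rightarrow> 'a \<Rightarrow> bool) \<Rightarrow> 'b set \<Rightarrow> ('b \<Rightarrow> 'b \<Rightarrow> bool) \<Rightarrow> bool" where
  "graph_iso V E W F \<longleftrightarrow>
     (\<exists>f. bij_betw f V W \<and> (\<forall>x\<in>V. \<forall>y\<in>V. E x y \<longleftrightarrow> F (f x) (f y)))"

definition circ_verts :: "nat \<Rightarrow> nat set" where
  "circ_verts n = {0..<n}"

definition circ_adj :: "nat \<Rightarrow> int set \<Rightarrow> nat \<Rightarrow> nat \<Rightarrow> bool" where
  "circ_adj n S i j \<longleftrightarrow>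
     (\<exists>s\<in>S. [int i - int j = s] (mod int n) \<or> [int i - int j = - s] (mod int n))"

definition is_circulant :: "'a set \<Rightarrow> ('a \<Rightarrow> 'a \<Rightarrow> bool) \<Rightarrow> bool" where
  "is_circulant V E \<longleftrightarrow>
     (\<exists>(n::nat) (S::int set). n \<ge> 1 \<and> graph_iso V E (circ_verts n) (circ_adj n S))"

definition complete_verts :: "nat \<Rightarrow> nat set" where
  "complete_verts n = {0..<n}"

definition complete_adj :: "nat \<Rightarrow> nat \<Rightarrow> bool" where
  "complete_adj i j \<longleftrightarrow> i \<noteq> j"

definition cart_verts :: "'a set \<Rightarrow> 'b set \<Rightarrow> ('a \<times> 'b) set" where
  "cart_verts V W = V \<times> W"

definition cart_adj :: "('a \<Rightarrow> 'a \<Rightarrow> bool) \<Rightarrow> ('b \<Rightarrow> 'b \<Rightarrow> bool) \<Rightarrow> ('a \<times> 'b) \<Rightarrow> ('a \<times> 'b) \<Rightarrow> bool" where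
  "cart_adj E F p q \<longleftrightarrow>
     (fst p = fst q \<and> F (snd p) (snd q)) \<or> (snd p = snd q \<and> E (fst p) (fst q))"

end

theory Submission
  imports Defs
begin


lemma sh_inj_gen:
  fixes N i j :: nat
  assumes "i < N" "j < N" "(i+1) mod N = (j+1) mod N" shows "i = j"
proof -
  have e: "\<And>k. k < N \<Longrightarrow> (k+1) mod N = (if k+1 = N then 0 else k+1)" by auto
  show ?thesis using assms e[of i] e[of j] by (auto split: if_splits)
qed

locale hc =
  fixes N m n :: nat and r c :: "nat \<Rightarrow> nat" and p :: "nat \<Rightarrow> nat \<Rightarrow> nat"
  assumes m2: "m \<ge> 2" and n2: "n \<ge> 2" and Nmn: "N = m*n"
  and rng: "\<And>i. i < N \<Longrightarrow> r i < m \<and> c i < n"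
  and F1: "\<And>i j. i<N \<Longrightarrow> j<N \<Longrightarrow> r i = r j \<Longrightarrow> c i = c j \<Longrightarrow> i = j"
  and pN: "\<And>a b. a<m \<Longrightarrow> b<n \<Longrightarrow> p a b < N \<and> r (p a b) = a \<and> c (p a b) = b"
  and F2: "\<And>i j. i<N \<Longrightarrow> j<N \<Longrightarrow> (r i = r j \<or> c i = c j) \<longleftrightarrow>
      (r ((i+1) mod N) = r ((j+1) mod N) \<or> c ((i+1) mod N) = c ((j+1) mod N))"
begin

abbreviation sh :: "nat \<Rightarrow> nat" where "sh i \<equiv> (i+1) mod N"

lemma N4: "N \<ge> 4"
proof -
  have "2*2 \<le> m*n" by (rule mult_le_mono[OF m2 n2])
  thus ?thesis using Nmn by simp
qed

lemma mN: "m < N"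
proof -
  have "m*2 \<le> m*n" using n2 by simp
  thus ?thesis using Nmn m2 by linarith
qed

lemma sh_lt: "sh i < N" using N4 by simp

lemma sh_inj: "i < N \<Longrightarrow> j < N \<Longrightarrow> sh i = sh j \<Longrightarrow> i = j"
  using sh_inj_gen by blast

lemma W:
  assumes "i<N" "j<N" "k<N" "r i = r j" "r i = r k" "i\<noteq>j" "i\<noteq>k"
  shows "r (sh i) = r (sh j) \<longleftrightarrow> r (sh i) = r (sh k)"
proof (cases "j = k")
  case True thus ?thesis by simp
next
  case False
  have L1: "r (sh i) = r (sh j) \<or> c (sh i) = c (sh j)" using F2[of i j] assms by auto
  have L2: "r (sh i) = r (sh k) \<or> c (sh i) = c (sh k)" using F2[of i k] assms by auto
  have L3: "r (sh j) = r (sh k) \<or> c (sh j) = c (sh k)" using F2[of j k] assms by auto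
  have d1: "sh i \<noteq> sh j" using sh_inj assms by blast
  have d2: "sh i \<noteq> sh k" using sh_inj assms by blast
  have d3: "sh j \<noteq> sh k" using sh_inj assms False by blast
  have e1: "r (sh i) = r (sh j) \<Longrightarrow> c (sh i) = c (sh j) \<Longrightarrow> False" using F1 sh_lt d1 by blast
  have e2: "r (sh i) = r (sh k) \<Longrightarrow> c (sh i) = c (sh k) \<Longrightarrow> False" using F1 sh_lt d2 by blast
  have e3: "r (sh j) = r (sh k) \<Longrightarrow> c (sh j) = c (sh k) \<Longrightarrow> False" using F1 sh_lt d3 by blast
  show ?thesis
  proof
    assume a: "r (sh i) = r (sh j)"
    show "r (sh i) = r (sh k)"
    proof (rule ccontr)
      assume b: "r (sh i) \<noteq> r (sh k)"
      then have "c (sh i) = c (sh k)" using L2 by simp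
      moreover have "r (sh j) \<noteq> r (sh k)" using a b by simp
      ultimately have "c (sh i) = c (sh j)" using L3 by simp
      then show False using e1 a by simp
    qed
  next
    assume a: "r (sh i) = r (sh k)"
    show "r (sh i) = r (sh j)"
    proof (rule ccontr)
      assume b: "r (sh i) \<noteq> r (sh j)"
      then have "c (sh i) = c (sh j)" using L1 by simp
      moreover have "r (sh j) \<noteq> r (sh k)" using a b by simp
      ultimately have "c (sh i) = c (sh k)" using L3 by simp
      then show False using e2 a by simp
    qed
  qed
qed

lemma samerow:
  assumes "i<N" "j<N" "k<N" "l<N" "r i = r j" "r k = r l" "r i = r k" "i\<noteq>j" "k\<noteq>l"
  shows "(r (sh i) = r (sh j)) = (r (sh k) = r (sh l))"
proof (cases "l = i")
  case True
  have ik: "i \<noteq> k" using True assms(9) by simp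
  have w: "(r (sh i) = r (sh j)) = (r (sh i) = r (sh k))"
    by (rule W[OF assms(1,2,3,5,7,8) ik])
  show ?thesis using w True by auto
next
  case False
  have il: "r i = r l" using assms(6,7) by simp
  have li: "l \<noteq> i" using False .
  have 1: "(r (sh i) = r (sh j)) = (r (sh i) = r (sh l))"
    by (rule W[OF assms(1,2,4,5) il assms(8)]) (use False in auto)
  have 2: "(r (sh l) = r (sh i)) = (r (sh l) = r (sh k))"
    by (rule W[OF assms(4,1,3)]) (use assms False in auto)
  have 3: "(r (sh i) = r (sh l)) = (r (sh l) = r (sh i))" by (rule eq_commute)
  have 4: "(r (sh l) = r (sh k)) = (r (sh k) = r (sh l))" by (rule eq_commute)
  show ?thesis using trans[OF 1 trans[OF 3 trans[OF 2 4]]] .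
qed

lemma across1:
  assumes "a<m" "a'<m" "a\<noteq>a'" "r (sh (p a 0)) = r (sh (p a 1))"
  shows "r (sh (p a' 0)) = r (sh (p a' 1))"
proof (rule ccontr)
  assume ne: "r (sh (p a' 0)) \<noteq> r (sh (p a' 1))"
  define x where "x = p a 0"
  define x' where "x' = p a 1"
  define y where "y = p a' 0"
  define y' where "y' = p a' 1"
  have n01: "0 < n" "1 < n" using n2 by auto
  have px: "x < N" "r x = a" "c x = 0" using pN[of a 0] assms n01 x_def by auto
  have px': "x' < N" "r x' = a" "c x' = 1" using pN[of a 1] assms n01 x'_def by auto
  have py: "y < N" "r y = a'" "c y = 0" using pN[of a' 0] assms n01 y_def by auto
  have py': "y' < N" "r y' = a'" "c y' = 1" using pN[of a' 1] assms n01 y'_def by auto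
  have A: "r (sh x) = r (sh x')" using assms x_def x'_def by simp
  have B: "c (sh y) = c (sh y')" using F2[of y y'] py py' ne y_def y'_def by auto
  have C: "r (sh x) = r (sh y) \<or> c (sh x) = c (sh y)" using F2[of x y] px py by auto
  have D: "r (sh x') = r (sh y') \<or> c (sh x') = c (sh y')" using F2[of x' y'] px' py' by auto
  have G: "\<And>u v. u < N \<Longrightarrow> v < N \<Longrightarrow> r (sh u) = r (sh v) \<Longrightarrow> c (sh u) = c (sh v) \<Longrightarrow> u = v"
    using F1 sh_lt sh_inj by blast
  have xy: "x \<noteq> y" "x \<noteq> y'" "x' \<noteq> y" "x' \<noteq> y'" "x \<noteq> x'" "y \<noteq> y'"
    using px px' py py' assms(3) by (metis zero_neq_one)+
  show False
  proof (cases "r (sh x) = r (sh y)")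
    case T1: True
    show False
    proof (cases "r (sh x') = r (sh y')")
      case True
      then have "r (sh y) = r (sh y')" using A T1 by simp
      then show False using G[of y y'] B py py' xy by blast
    next
      case False
      then have "c (sh x') = c (sh y')" using D by simp
      then have "c (sh x') = c (sh y)" using B by simp
      moreover have "r (sh x') = r (sh y)" using A T1 by simp
      ultimately show False using G[of x' y] px' py xy by blast
    qed
  next
    case F1: False
    then have c1: "c (sh x) = c (sh y)" using C by simp
    show False
    proof (cases "r (sh x') = r (sh y')")
      case True
      then have "r (sh x) = r (sh y')" using A by simp
      moreover have "c (sh x) = c (sh y')" using c1 B by simp
      ultimately show False using G[of x y'] px py' xy by blast
    next
      case False
      then have "c (sh x') = c (sh y')" using D by simp
      then have "c (sh x) = c (sh x')" using B c1 by simp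
      then show False using G[of x x'] A px px' xy by blast
    qed
  qed
qed

lemma canon:
  assumes "i<N" "j<N" "r i = r j" "i\<noteq>j"
  shows "(r (sh i) = r (sh j)) = (r (sh (p 0 0)) = r (sh (p 0 1)))"
proof -
  define a where "a = r i"
  have am: "a < m" using rng assms a_def by auto
  have n01: "0 < n" "1 < n" using n2 by auto
  have m0: "0 < m" using m2 by auto
  have "c (p a 0) \<noteq> c (p a 1)" using pN[of a 0] pN[of a 1] am n01 by simp
  then have ne: "p a 0 \<noteq> p a 1" by auto
  have pa: "p a 0 < N" "p a 1 < N" "r (p a 0) = a" "r (p a 1) = a"
    using pN[of a 0] pN[of a 1] am n01 by auto
  have "(r (sh i) = r (sh j)) = (r (sh (p a 0)) = r (sh (p a 1)))"
    by (rule samerow[OF assms(1,2) pa(1,2)]) (use pa assms a_def ne in simp_all)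
  also have "\<dots> = (r (sh (p 0 0)) = r (sh (p 0 1)))"
  proof (cases "a = 0")
    case False
    have "r (sh (p a 0)) = r (sh (p a 1)) \<Longrightarrow> r (sh (p 0 0)) = r (sh (p 0 1))"
      by (rule across1[of a 0]) (use am m0 False in simp_all)
    moreover have "r (sh (p 0 0)) = r (sh (p 0 1)) \<Longrightarrow> r (sh (p a 0)) = r (sh (p a 1))"
      by (rule across1[of 0 a]) (use am m0 False in simp_all)
    ultimately show ?thesis by blast
  qed simp
  finally show ?thesis .
qed

lemma dich: "(\<forall>i<N. \<forall>j<N. r i = r j \<longrightarrow> r (sh i) = r (sh j)) \<or>
             (\<forall>i<N. \<forall>j<N. r i = r j \<longrightarrow> c (sh i) = c (sh j))"
proof (cases "r (sh (p 0 0)) = r (sh (p 0 1))")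
  case T0: True
  have "\<forall>i<N. \<forall>j<N. r i = r j \<longrightarrow> r (sh i) = r (sh j)"
  proof (intro allI impI)
    fix i j assume h: "i<N" "j<N" "r i = r j"
    show "r (sh i) = r (sh j)"
    proof (cases "i = j")
      case False
      then show ?thesis using canon[OF h False] T0 by simp
    qed simp
  qed
  then show ?thesis by blast
next
  case F0: False
  have "\<forall>i<N. \<forall>j<N. r i = r j \<longrightarrow> c (sh i) = c (sh j)"
  proof (intro allI impI)
    fix i j assume h: "i<N" "j<N" "r i = r j"
    show "c (sh i) = c (sh j)"
    proof (cases "i = j")
      case False
      then have "r (sh i) \<noteq> r (sh j)" using canon[OF h False] F0 by simp
      then show ?thesis using F2[of i j] h by auto
    qed simp
  qed
  then show ?thesis by blast
qed

lemma noPS: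
  assumes "\<forall>i<N. \<forall>j<N. r i = r j \<longrightarrow> r (sh i) = r (sh j)"
    and "\<forall>i<N. \<forall>j<N. c i = c j \<longrightarrow> r (sh i) = r (sh j)"
  shows False
proof -
  have n01: "0 < n" "1 < n" using n2 by auto
  have m01: "0 < m" "1 < m" using m2 by auto
  define x where "x = p 0 0"
  define y where "y = p 0 1"
  define z where "z = p 1 0"
  have px: "x < N" "r x = 0" "c x = 0" using pN[of 0 0] n01 m01 x_def by auto
  have py: "y < N" "r y = 0" "c y = 1" using pN[of 0 1] n01 m01 y_def by auto
  have pz: "z < N" "r z = 1" "c z = 0" using pN[of 1 0] n01 m01 z_def by auto
  have "r x = r y" using px py by simp
  then have 1: "r (sh x) = r (sh y)" using assms(1) px py by blast
  have "c x = c z" using px pz by simp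
  then have 2: "r (sh x) = r (sh z)" using assms(2) px pz by blast
  have "r (sh y) = r (sh z)" using 1 2 by simp
  then have "r y = r z \<or> c y = c z" using F2[OF py(1) pz(1)] by blast
  then show False using py pz by simp
qed


lemma modsh: "((i mod N) + 1) mod N = (i + 1) mod N"
  by (rule mod_add_left_eq)

lemma pres_shift:
  assumes P: "\<forall>i<N. \<forall>j<N. r i = r j \<longrightarrow> r (sh i) = r (sh j)"
    and h: "r (i mod N) = r (j mod N)"
  shows "r ((i+k) mod N) = r ((j+k) mod N)"
proof (induction k)
  case 0 then show ?case using h by simp
next
  case (Suc k)
  have lt: "(i+k) mod N < N" "(j+k) mod N < N" using N4 by auto
  have "r (sh ((i+k) mod N)) = r (sh ((j+k) mod N))" using P lt Suc by blast
  then have "r ((i+k+1) mod N) = r ((j+k+1) mod N)" by (simp only: modsh)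
  then show ?case by (simp only: add_Suc_right Suc_eq_plus1 add.assoc)
qed

lemma pigeon:
  fixes h :: "nat \<Rightarrow> nat"
  assumes "\<And>a. a \<le> m \<Longrightarrow> h a < m"
  shows "\<exists>a b. a < b \<and> b \<le> m \<and> h a = h b"
proof -
  have "\<not> inj_on h {0..m}"
  proof
    assume "inj_on h {0..m}"
    hence 1: "card (h ` {0..m}) = m+1" by (simp add: card_image)
    have "h ` {0..m} \<subseteq> {0..<m}" using assms by auto
    hence "card (h ` {0..m}) \<le> card {0..<m}" by (intro card_mono) simp_all
    then show False using 1 by simp
  qed
  then obtain a b where ab: "a \<in> {0..m}" "b \<in> {0..m}" "a \<noteq> b" "h a = h b"
    unfolding inj_on_def by blast
  show ?thesis
  proof (cases "a < b")
    case True then show ?thesis using ab by auto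
  next
    case False then have ba: "b < a" using ab by simp
    have "a \<le> m" "h b = h a" using ab by auto
    then show ?thesis using ba by blast
  qed
qed

lemma pres:
  assumes P: "\<forall>i<N. \<forall>j<N. r i = r j \<longrightarrow> r (sh i) = r (sh j)"
  shows "\<exists>t. 1 \<le> t \<and> t \<le> m \<and> (\<forall>k. r ((k*t) mod N) = r 0)"
proof -
  have "\<exists>a b. a < b \<and> b \<le> m \<and> r a = r b"
    by (rule pigeon) (use rng mN in auto)
  then obtain a b where ab: "a < b" "b \<le> m" "r a = r b" by blast
  have aN: "a < N" "b < N" using ab mN by auto
  have "r (a mod N) = r (b mod N)" using ab aN by simp
  then have 1: "r ((a + (N - a)) mod N) = r ((b + (N - a)) mod N)" by (rule pres_shift[OF P])
  have e1: "(a + (N - a)) mod N = 0" using aN by simp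
  have e2a: "b + (N - a) = (b - a) + N" using aN ab by arith
  have e2b: "b - a < N" using aN by arith
  have e2: "(b + (N - a)) mod N = b - a" unfolding e2a mod_add_self2 using e2b by (rule mod_less)
  have t0: "r 0 = r (b - a)" using 1 by (simp only: e1 e2)
  define t where "t = b - a"
  have tt: "1 \<le> t" "t \<le> m" using ab t_def by auto
  have t0': "r 0 = r t" using t0 unfolding t_def .
  have "\<forall>k. r ((k*t) mod N) = r 0"
  proof
    fix k show "r ((k*t) mod N) = r 0"
    proof (induction k)
      case 0 then show ?case by simp
    next
      case (Suc k)
      have tl: "t mod N = t" using t_def aN by simp
      have "r (0 mod N) = r (t mod N)" using t0' by (simp only: tl mod_0)
      then have "r ((0 + k*t) mod N) = r ((t + k*t) mod N)" by (rule pres_shift[OF P])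
      then have "r ((k*t) mod N) = r ((Suc k * t) mod N)" by (simp only: add_0 mult_Suc)
      then show ?case using Suc by simp
    qed
  qed
  then show ?thesis using tt by blast
qed

lemma swap_le:
  assumes S1: "\<forall>i<N. \<forall>j<N. r i = r j \<longrightarrow> c (sh i) = c (sh j)"
    and S2: "\<forall>i<N. \<forall>j<N. c i = c j \<longrightarrow> r (sh i) = r (sh j)"
  shows "n \<le> 2"
proof -
  have rc: "c ((i+1) mod N) = c ((j+1) mod N)" if "r (i mod N) = r (j mod N)" for i j
  proof -
    have lt: "i mod N < N" "j mod N < N" using N4 by auto
    have "c (sh (i mod N)) = c (sh (j mod N))" using S1 lt that by blast
    then show ?thesis by (simp only: modsh)
  qed
  have cr: "r ((i+1) mod N) = r ((j+1) mod N)" if "c (i mod N) = c (j mod N)" for i j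
  proof -
    have lt: "i mod N < N" "j mod N < N" using N4 by auto
    have "r (sh (i mod N)) = r (sh (j mod N))" using S2 lt that by blast
    then show ?thesis by (simp only: modsh)
  qed
  have rr2: "r ((i+2*k) mod N) = r ((j+2*k) mod N)" if "r (i mod N) = r (j mod N)" for i j k
  proof (induction k)
    case 0 then show ?case using that by simp
  next
    case (Suc k)
    have 1: "r ((i+2*k+1+1) mod N) = r ((j+2*k+1+1) mod N)" by (rule cr[OF rc[OF Suc]])
    have ei: "i + 2*Suc k = i+2*k+1+1" "j + 2*Suc k = j+2*k+1+1" by simp_all
    show ?case unfolding ei by (rule 1)
  qed
  have cc2: "c ((i+2*k) mod N) = c ((j+2*k) mod N)" if "c (i mod N) = c (j mod N)" for i j k
  proof (induction k)
    case 0 then show ?case using that by simp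
  next
    case (Suc k)
    have 1: "c ((i+2*k+1+1) mod N) = c ((j+2*k+1+1) mod N)" by (rule rc[OF cr[OF Suc]])
    have ei: "i + 2*Suc k = i+2*k+1+1" "j + 2*Suc k = j+2*k+1+1" by simp_all
    show ?case unfolding ei by (rule 1)
  qed
  have "\<exists>a b. a < b \<and> b \<le> m \<and> r ((2*a) mod N) = r ((2*b) mod N)"
  proof (rule pigeon)
    fix a
    have "(2*a) mod N < N" using N4 by simp
    then show "r ((2*a) mod N) < m" using rng by blast
  qed
  then obtain a b where ab: "a < b" "b \<le> m" "r ((2*a) mod N) = r ((2*b) mod N)" by blast
  obtain N' where N': "N = Suc N'" using N4 by (cases N) auto
  have "r ((2*a) mod N mod N) = r ((2*b) mod N mod N)" using ab(3) by (simp only: mod_mod_trivial)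
  then have "r (((2*a) mod N + 2*(a*N')) mod N) = r (((2*b) mod N + 2*(a*N')) mod N)"
    by (rule rr2)
  then have 1: "r ((2*a + 2*(a*N')) mod N) = r ((2*b + 2*(a*N')) mod N)"
    by (simp only: mod_add_left_eq)
  define t where "t = b - a"
  have tt: "1 \<le> t" "t \<le> m" using ab t_def by auto
  have ea0: "2*a + 2*(a*N') = 0 + (2*a) * N" using N' by (simp add: algebra_simps)
  have ea: "(2*a + 2*(a*N')) mod N = 0" unfolding ea0 mod_mult_self1 by simp
  have eb0: "2*b + 2*(a*N') = 2*t + (2*a) * N" using N' ab t_def by (simp add: algebra_simps)
  have eb: "(2*b + 2*(a*N')) mod N = (2*t) mod N" unfolding eb0 mod_mult_self1 by (rule refl)
  have t0: "r 0 = r ((2*t) mod N)" using 1 by (simp only: ea eb)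
  have N0: "0 < N" "1 < N" using N4 by auto
  have r0: "r 0 < m" and c1: "c 1 < n" using rng N0 by auto
  define z where "z = p (r 0) (c 1)"
  have pz: "z < N" "r z = r 0" "c z = c 1" using pN[OF r0 c1] z_def by auto
  have zm: "z mod N = z" using pz by simp
  have "r (0 mod N) = r (z mod N)" unfolding zm mod_0 using pz(2) by (rule sym)
  then have 2: "r ((0 + 2*t) mod N) = r ((z + 2*t) mod N)" by (rule rr2)
  have "r ((z+2*t) mod N) = r ((0+2*t) mod N)" using 2 by (rule sym)
  also have "\<dots> = r 0" unfolding add_0 using t0 by (rule sym)
  also have "\<dots> = r z" using pz(2) by (rule sym)
  finally have R: "r ((z+2*t) mod N) = r z" .
  have "r (0 mod N) = r ((2*t) mod N mod N)" unfolding mod_0 mod_mod_trivial by (rule t0)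
  then have "c ((0+1) mod N) = c (((2*t) mod N + 1) mod N)" by (rule rc)
  then have C1: "c 1 = c ((2*t + 1) mod N)" using N0 by (simp only: mod_add_left_eq add_0 mod_less)
  have one: "1 mod N = 1" using N0 by simp
  have "c (1 mod N) = c (z mod N)" unfolding one zm using pz(3) by (rule sym)
  then have 3: "c ((1 + 2*t) mod N) = c ((z + 2*t) mod N)" by (rule cc2)
  have "c ((z+2*t) mod N) = c ((1 + 2*t) mod N)" using 3 by (rule sym)
  also have "\<dots> = c ((2*t + 1) mod N)" by (simp only: add.commute)
  also have "\<dots> = c 1" using C1 by (rule sym)
  also have "\<dots> = c z" using pz(3) by (rule sym)
  finally have C: "c ((z+2*t) mod N) = c z" .
  have lt: "(z+2*t) mod N < N" using N0 by simp
  have zz: "(z + 2*t) mod N = z" using F1[OF lt pz(1) R C] .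
  then have "(z + 2*t) mod N = z mod N" unfolding zm .
  then have "N dvd (z + 2*t) - z" using mod_eq_dvd_iff_nat[of z "z + 2*t" N] by simp
  then have "N dvd 2*t" by simp
  then have "N \<le> 2*t" using tt by (simp add: dvd_imp_le)
  then have "m*n \<le> m*2" using tt Nmn by linarith
  then show ?thesis using m2 by simp
qed


lemma preserve_final:
  assumes t: "1 \<le> t" "t \<le> m" "\<forall>k. r ((k*t) mod N) = r 0"
    and u: "1 \<le> u" "u \<le> n" "\<forall>k. c ((k*u) mod N) = c 0"
  shows "gcd m n = 1"
proof -
  define L where "L = lcm t u"
  obtain k1 where k1: "L = k1 * t" unfolding L_def by (metis dvd_lcm1 dvd_def mult.commute)
  obtain k2 where k2: "L = k2 * u" unfolding L_def by (metis dvd_lcm2 dvd_def mult.commute)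
  have R: "r (L mod N) = r 0" using t(3) k1 by simp
  have C: "c (L mod N) = c 0" using u(3) k2 by simp
  have N0: "0 < N" using N4 by simp
  have "L mod N = 0" by (rule F1) (use R C N0 in auto)
  then have "N dvd L" by (simp add: dvd_eq_mod_eq_0)
  moreover have Lp: "L > 0" unfolding L_def using t u by (simp add: lcm_pos_nat)
  ultimately have NL: "N \<le> L" by (simp add: dvd_imp_le)
  have gl: "t*u = gcd t u * L" unfolding L_def by (rule prod_gcd_lcm_nat)
  have "gcd t u \<ge> 1" using t u by (simp add: Suc_le_eq)
  then have Ltu: "L \<le> t*u" using gl by simp
  have tum: "t*u \<le> m*n" using t u by (simp add: mult_le_mono)
  have eq: "t*u = m*n" using NL Ltu tum Nmn by linarith
  have "L = t*u" using NL Ltu tum Nmn by linarith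
  then have g1: "gcd t u = 1" using gl Lp by simp
  have tm: "t = m"
  proof (rule ccontr)
    assume "t \<noteq> m" then have "t < m" using t by simp
    then have "t*u < m*u" using u by simp
    also have "\<dots> \<le> m*n" using u by simp
    finally show False using eq by simp
  qed
  then have "u = n" using eq m2 by simp
  then show ?thesis using g1 tm by simp
qed

theorem main: "gcd m n = 1 \<or> (m = 2 \<and> n = 2)"
proof -
  interpret sym: hc N n m c r "\<lambda>a b. p b a"
  proof
    show "n \<ge> 2" by (rule n2)
    show "m \<ge> 2" by (rule m2)
    show "N = n*m" using Nmn by simp
    show "\<And>i. i < N \<Longrightarrow> c i < n \<and> r i < m" using rng by blast
    show "\<And>i j. i<N \<Longrightarrow> j<N \<Longrightarrow> c i = c j \<Longrightarrow> r i = r j \<Longrightarrow> i = j" using F1 by blast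
    show "\<And>a b. a<n \<Longrightarrow> b<m \<Longrightarrow> p b a < N \<and> c (p b a) = a \<and> r (p b a) = b" using pN by blast
    show "\<And>i j. i<N \<Longrightarrow> j<N \<Longrightarrow> (c i = c j \<or> r i = r j) \<longleftrightarrow>
      (c ((i+1) mod N) = c ((j+1) mod N) \<or> r ((i+1) mod N) = r ((j+1) mod N))"
      using F2 by blast
  qed
  have D1: "(\<forall>i<N. \<forall>j<N. r i = r j \<longrightarrow> r (sh i) = r (sh j)) \<or>
             (\<forall>i<N. \<forall>j<N. r i = r j \<longrightarrow> c (sh i) = c (sh j))" by (rule dich)
  have D2: "(\<forall>i<N. \<forall>j<N. c i = c j \<longrightarrow> c (sh i) = c (sh j)) \<or>
             (\<forall>i<N. \<forall>j<N. c i = c j \<longrightarrow> r (sh i) = r (sh j))" by (rule sym.dich)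
  show ?thesis
  proof (cases "\<forall>i<N. \<forall>j<N. r i = r j \<longrightarrow> r (sh i) = r (sh j)")
    case P1: True
    show ?thesis
    proof (cases "\<forall>i<N. \<forall>j<N. c i = c j \<longrightarrow> c (sh i) = c (sh j)")
      case P2: True
      obtain t where t: "1 \<le> t" "t \<le> m" "\<forall>k. r ((k*t) mod N) = r 0" using pres[OF P1] by blast
      obtain u where u: "1 \<le> u" "u \<le> n" "\<forall>k. c ((k*u) mod N) = c 0" using sym.pres[OF P2] by blast
      show ?thesis using preserve_final[OF t u] by blast
    next
      case False
      then have "\<forall>i<N. \<forall>j<N. c i = c j \<longrightarrow> r (sh i) = r (sh j)" using D2 by blast
      then show ?thesis using noPS P1 by blast
    qed
  next
    case False
    then have S1: "\<forall>i<N. \<forall>j<N. r i = r j \<longrightarrow> c (sh i) = c (sh j)" using D1 by blast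
    show ?thesis
    proof (cases "\<forall>i<N. \<forall>j<N. c i = c j \<longrightarrow> c (sh i) = c (sh j)")
      case P2: True
      then show ?thesis using sym.noPS S1 by blast
    next
      case False
      then have S2: "\<forall>i<N. \<forall>j<N. c i = c j \<longrightarrow> r (sh i) = r (sh j)" using D2 by blast
      have "n \<le> 2" by (rule swap_le[OF S1 S2])
      moreover have "m \<le> 2" by (rule sym.swap_le[OF S2 S1])
      ultimately show ?thesis using m2 n2 by simp
    qed
  qed
qed

end


lemma circ_shift: "circ_adj N S ((i+1) mod N) ((j+1) mod N) = circ_adj N S i j"
proof -
  have e: "[int ((i+1) mod N) - int ((j+1) mod N) = int i - int j] (mod int N)"
    unfolding cong_def zmod_int by (simp add: mod_diff_eq)
  have "\<And>s. [int ((i+1) mod N) - int ((j+1) mod N) = s] (mod int N) \<longleftrightarrow> [int i - int j = s] (mod int N)"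
    using e by (meson cong_sym cong_trans)
  then show ?thesis unfolding circ_adj_def by simp
qed

lemma fwd:
  fixes m n :: nat
  assumes m2: "m \<ge> 2" and n2: "n \<ge> 2"
    and circ: "is_circulant (cart_verts (complete_verts m) (complete_verts n)) (cart_adj complete_adj complete_adj)"
  shows "gcd m n = 1 \<or> (m = 2 \<and> n = 2)"
proof -
  define V where "V = {0..<m} \<times> {0..<n}"
  define E where "E = (cart_adj complete_adj complete_adj :: nat\<times>nat \<Rightarrow> nat\<times>nat \<Rightarrow> bool)"
  obtain N S f where N1: "N \<ge> 1" and bij: "bij_betw f V {0..<N}"
    and adj: "\<forall>x\<in>V. \<forall>y\<in>V. E x y \<longleftrightarrow> circ_adj N S (f x) (f y)"
    using circ unfolding is_circulant_def graph_iso_def circ_verts_def cart_verts_def complete_verts_def V_def E_def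
    by blast
  define g where "g = inv_into V f"
  have gb: "bij_betw g {0..<N} V" unfolding g_def by (rule bij_betw_inv_into[OF bij])
  have gV: "\<And>i. i < N \<Longrightarrow> g i \<in> V" using gb bij_betw_apply by fastforce
  have fg: "\<And>i. i < N \<Longrightarrow> f (g i) = i" unfolding g_def using bij bij_betw_inv_into_right by fastforce
  have gf: "\<And>x. x \<in> V \<Longrightarrow> g (f x) = x" unfolding g_def using bij bij_betw_inv_into_left by fastforce
  have fV: "\<And>x. x \<in> V \<Longrightarrow> f x < N" using bij bij_betw_apply by fastforce
  have cardV: "card V = m*n" unfolding V_def by simp
  have NN: "N = m*n" using bij_betw_same_card[OF bij] cardV by simp
  define r where "r i = fst (g i)" for i
  define c where "c i = snd (g i)" for i
  have ginj: "\<And>i j. i<N \<Longrightarrow> j<N \<Longrightarrow> g i = g j \<Longrightarrow> i = j" using fg by metis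
  have key: "(r i = r j \<or> c i = c j) \<longleftrightarrow> (i = j \<or> circ_adj N S i j)" if ij: "i<N" "j<N" for i j
  proof -
    have 1: "circ_adj N S i j \<longleftrightarrow> E (g i) (g j)" using adj gV[OF ij(1)] gV[OF ij(2)] fg ij by simp
    have 2: "E (g i) (g j) \<longleftrightarrow> ((fst (g i) = fst (g j) \<and> snd (g i) \<noteq> snd (g j)) \<or> (snd (g i) = snd (g j) \<and> fst (g i) \<noteq> fst (g j)))"
      unfolding E_def cart_adj_def complete_adj_def by auto
    have 3: "i \<noteq> j \<Longrightarrow> g i \<noteq> g j" using ginj ij by blast
    show ?thesis unfolding r_def c_def 1 2 using 3 by (auto simp: prod_eq_iff)
  qed
  have F2: "(r i = r j \<or> c i = c j) \<longleftrightarrow>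
      (r ((i+1) mod N) = r ((j+1) mod N) \<or> c ((i+1) mod N) = c ((j+1) mod N))" if ij: "i<N" "j<N" for i j
  proof -
    have lt: "(i+1) mod N < N" "(j+1) mod N < N" using N1 by auto
    have "((i+1) mod N = (j+1) mod N) \<longleftrightarrow> i = j" using sh_inj_gen[OF ij] by blast
    then show ?thesis using key[OF ij] key[OF lt] circ_shift[of N S i j] by simp
  qed
  interpret hc N m n r c "\<lambda>a b. f (a,b)"
  proof
    show "m \<ge> 2" by (rule m2)
    show "n \<ge> 2" by (rule n2)
    show "N = m*n" by (rule NN)
    show "\<And>i. i < N \<Longrightarrow> r i < m \<and> c i < n" using gV unfolding r_def c_def V_def by (simp add: mem_Times_iff)
    show "\<And>i j. i<N \<Longrightarrow> j<N \<Longrightarrow> r i = r j \<Longrightarrow> c i = c j \<Longrightarrow> i = j"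
      unfolding r_def c_def using ginj by (metis prod_eqI)
    show "\<And>a b. a<m \<Longrightarrow> b<n \<Longrightarrow> f (a,b) < N \<and> r (f (a,b)) = a \<and> c (f (a,b)) = b"
      unfolding r_def c_def using fV gf unfolding V_def by simp
    show "\<And>i j. i<N \<Longrightarrow> j<N \<Longrightarrow> (r i = r j \<or> c i = c j) \<longleftrightarrow>
      (r ((i+1) mod N) = r ((j+1) mod N) \<or> c ((i+1) mod N) = c ((j+1) mod N))" by (rule F2)
  qed
  show ?thesis by (rule main)
qed

lemma coprime_circ:
  fixes m n :: nat
  assumes m1: "m \<ge> 1" and n1: "n \<ge> 1" and g: "gcd m n = 1"
  shows "is_circulant (cart_verts (complete_verts m) (complete_verts n)) (cart_adj complete_adj complete_adj)"
proof -
  define V where "V = {0..<m} \<times> {0..<n}"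
  define E where "E = (cart_adj complete_adj complete_adj :: nat\<times>nat \<Rightarrow> nat\<times>nat \<Rightarrow> bool)"
  define h where "h x = (x mod m, x mod n)" for x
  define S :: "int set" where "S = {d. (int m dvd d \<and> \<not> int n dvd d) \<or> (int n dvd d \<and> \<not> int m dvd d)}"
  have inj: "inj_on h {0..<m*n}"
  proof (rule inj_onI)
    fix x y assume xy: "x \<in> {0..<m*n}" "y \<in> {0..<m*n}" "h x = h y"
    then have "[x = y] (mod m)" "[x = y] (mod n)" unfolding h_def cong_def by auto
    then have "[x = y] (mod m*n)" using coprime_cong_mult_nat g coprime_iff_gcd_eq_1 by blast
    then show "x = y" using xy unfolding cong_def by simp
  qed
  have sub: "h ` {0..<m*n} \<subseteq> V" unfolding h_def V_def using m1 n1 by auto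
  have "card (h ` {0..<m*n}) = m*n" using card_image[OF inj] by simp
  moreover have "card V = m*n" unfolding V_def by simp
  ultimately have img: "h ` {0..<m*n} = V" using card_subset_eq[of V, OF _ sub] unfolding V_def by simp
  have hb: "bij_betw h {0..<m*n} V" unfolding bij_betw_def using inj img by blast
  define f where "f = inv_into {0..<m*n} h"
  have fb: "bij_betw f V {0..<m*n}" unfolding f_def by (rule bij_betw_inv_into[OF hb])
  have hf: "\<And>x. x \<in> V \<Longrightarrow> h (f x) = x" unfolding f_def using hb bij_betw_inv_into_right by fastforce
  have md: "\<And>k. (i mod k = j mod k) \<longleftrightarrow> int k dvd (int i - int j)" for i j :: nat
  proof -
    fix k
    have "(i mod k = j mod k) \<longleftrightarrow> int (i mod k) = int (j mod k)" by simp
    also have "\<dots> \<longleftrightarrow> int i mod int k = int j mod int k" by (simp only: zmod_int)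
    also have "\<dots> \<longleftrightarrow> int k dvd (int i - int j)" by (rule mod_eq_dvd_iff)
    finally show "(i mod k = j mod k) \<longleftrightarrow> int k dvd (int i - int j)" .
  qed
  have adjh: "E (h i) (h j) \<longleftrightarrow> int i - int j \<in> S" for i j
    unfolding E_def cart_adj_def complete_adj_def h_def S_def by (simp add: md)
  have cl: "d \<in> S \<longleftrightarrow> e \<in> S" if "[d = e] (mod int (m*n))" for d e
  proof -
    have "int m * int n dvd d - e" using that by (simp add: cong_iff_dvd_diff)
    then have hm: "int m dvd d - e" and hn: "int n dvd d - e"
      using dvd_mult_left dvd_mult_right by blast+
    have ee: "e = d - (d - e)" "d = (d - e) + e" by simp_all
    have "int m dvd d \<longleftrightarrow> int m dvd e"
    proof
      assume "int m dvd d" then show "int m dvd e" using hm ee(1) dvd_diff by metis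
    next
      assume "int m dvd e" then show "int m dvd d" using hm ee(2) dvd_add by metis
    qed
    moreover have "int n dvd d \<longleftrightarrow> int n dvd e"
    proof
      assume "int n dvd d" then show "int n dvd e" using hn ee(1) dvd_diff by metis
    next
      assume "int n dvd e" then show "int n dvd d" using hn ee(2) dvd_add by metis
    qed
    ultimately show ?thesis unfolding S_def by simp
  qed
  have neg: "- s \<in> S \<longleftrightarrow> s \<in> S" for s unfolding S_def by simp
  have circS: "circ_adj (m*n) S i j \<longleftrightarrow> int i - int j \<in> S" for i j
  proof
    assume "circ_adj (m*n) S i j"
    then obtain s where s: "s \<in> S" "[int i - int j = s] (mod int (m*n)) \<or> [int i - int j = - s] (mod int (m*n))"
      unfolding circ_adj_def by blast
    then show "int i - int j \<in> S" using cl neg by blast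
  next
    assume "int i - int j \<in> S"
    then show "circ_adj (m*n) S i j" unfolding circ_adj_def by (auto intro: cong_refl)
  qed
  have "graph_iso V E {0..<m*n} (circ_adj (m*n) S)"
    unfolding graph_iso_def
  proof (intro exI conjI ballI)
    show "bij_betw f V {0..<m*n}" by (rule fb)
    fix x y assume xy: "x \<in> V" "y \<in> V"
    have "E x y = E (h (f x)) (h (f y))" using hf xy by simp
    also have "\<dots> = circ_adj (m*n) S (f x) (f y)" using adjh circS by simp
    finally show "E x y = circ_adj (m*n) S (f x) (f y)" .
  qed
  moreover have "m*n \<ge> 1" using m1 n1 by simp
  ultimately show ?thesis unfolding is_circulant_def circ_verts_def cart_verts_def complete_verts_def V_def E_def
    by blast
qed

lemma two_circ:
  "is_circulant (cart_verts (complete_verts 2) (complete_verts 2)) (cart_adj complete_adj complete_adj)"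
proof -
  define f :: "nat \<times> nat \<Rightarrow> nat" where "f x = 2 * fst x + (if fst x = snd x then 0 else 1)" for x
  have V: "cart_verts (complete_verts 2) (complete_verts 2) = {(0,0),(0,1),(1,0),(1,1)}"
    by (auto simp: cart_verts_def complete_verts_def)
  have W: "circ_verts 4 = {0,1,2,3}" by (auto simp: circ_verts_def)
  have b: "bij_betw f {(0,0),(0,1),(1,0),(1,1)} {0,1,2,3}"
    unfolding bij_betw_def f_def by (auto simp: inj_on_def)
  have a: "\<forall>x\<in>{(0,0),(0,1),(1,0),(1,1)}. \<forall>y\<in>{(0,0),(0,1),(1,0),(1,1)}.
      cart_adj complete_adj complete_adj x y \<longleftrightarrow> circ_adj 4 {1} (f x) (f y)"
    by (simp add: f_def cart_adj_def complete_adj_def circ_adj_def cong_def)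
  have gi: "graph_iso {(0,0),(0,1),(1,0),(1,1)} (cart_adj complete_adj complete_adj) (circ_verts 4) (circ_adj 4 {1})"
    unfolding graph_iso_def W using b a by blast
  have "(1::nat) \<le> 4" by simp
  then show ?thesis unfolding is_circulant_def V using gi by blast
qed


theorem corollary5:
  fixes m n :: nat
  assumes "m \<ge> 2" and "n \<ge> 2"
  shows "is_circulant (cart_verts (complete_verts m) (complete_verts n))
                      (cart_adj complete_adj complete_adj)
         \<longleftrightarrow> (gcd m n = 1 \<or> (m = 2 \<and> n = 2))"
proof
  assume "is_circulant (cart_verts (complete_verts m) (complete_verts n))
                      (cart_adj complete_adj complete_adj)"
  then show "gcd m n = 1 \<or> (m = 2 \<and> n = 2)" by (rule fwd[OF assms])
next
  assume h: "gcd m n = 1 \<or> (m = 2 \<and> n = 2)"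
  show "is_circulant (cart_verts (complete_verts m) (complete_verts n))
                      (cart_adj complete_adj complete_adj)"
  proof (cases "gcd m n = 1")
    case True
    have m1: "m \<ge> 1" and n1: "n \<ge> 1" using assms by auto
    show ?thesis by (rule coprime_circ[OF m1 n1 True])
  next
    case False
    then have mn: "m = 2" "n = 2" using h by auto
    show ?thesis unfolding mn by (rule two_circ)
  qed
qed

end
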